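(* Let $k<n$ be coprime positive integers, $b=k/n$, and let $F\in\mathfrak{F}$ (with this $b$ and $n$). Then $F$ has an attracting periodic orbit of period $n$ all of whose points lie in the first lap $(-\infty,y_-)$ or the third lap $(y_+,\infty)$ of $F$. Moreover, both critical points $y_-$ and $y_+$ of $F$ lie in the immediate basin of attraction of this periodic orbit.
   Context: Fix coprime positive integers $k<n$ and set $b=k/n\in(0,1)$. Let $g\colon\mathbb{R}\to(0,1)$ be a $C^3$ map and $F\colon\mathbb{R}\to\mathbb{R}$, $F(x)=x+b-g(x)$. The class $\mathfrak{F}$ consists of all such $F$ for which the Schwarzian derivative $SF=\frac{F'''}{F'}-\frac32\left(\frac{F''}{F'}\right)^2$ is negative (wherever defined) and the following hold: (A) there exist $y_-,y_+$ with $b-1<y_-<0<y_+<b$ such that $0<g'(x)<1$ on $(-\infty,y_-)\cup(y_+,\infty)$, $g'(y_-)=g'(y_+)=1$, and $g'(x)>1$ on $(y_-,y_+)$; (B) $g(b-1)<b<g(b)$; (C) there exists $\varepsilon>0$ such that (C1) $g(x)<\varepsilon$ for all $x<-\frac1{2n}$; (C2) $g(x)>1-\varepsilon$ for all $x>\frac1{2n}$; (C3) $(n-1)\varepsilon<1-g(y_+)$ and $(n-1)\varepsilon<\frac1{2n}-\big(1-g(y_+)+y_+\big)$; (C4) $(n-1)\varepsilon<g(y_-)$ and $(n-1)\varepsilon<\frac1{2n}-\big(g(y_-)-y_-\big)$. Thus $F$ is increasing on $(-\infty,y_-]$ (the first lap) and on $[y_+,\infty)$ (the third lap), decreasing on $[y_-,y_+]$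 (the second lap), and $y_\pm$ are its critical points. The immediate basin of attraction of an attracting periodic orbit is the union of the connected components of its basin of attraction that contain points of the orbit. *)

theory Defs
  imports "HOL-Analysis.Analysis"
begin

definition C3 :: "(real \<Rightarrow> real) \<Rightarrow> bool" where
  "C3 f \<longleftrightarrow>
     (\<forall>x. (f has_real_derivative deriv f x) (at x)) \<and>
     (\<forall>x. (deriv f has_real_derivative deriv (deriv f) x) (at x)) \<and>
     (\<forall>x. (deriv (deriv f) has_real_derivative deriv (deriv (deriv f)) x) (at x)) \<and>
     continuous_on UNIV (deriv (deriv (deriv f)))"

definition schwarzian :: "(real \<Rightarrow> real) \<Rightarrow> real \<Rightarrow> real" where
  "schwarzian F x =
     deriv (deriv (deriv F)) x / deriv F x - 3 / 2 * (deriv (deriv F) x / deriv F x) ^ 2"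

definition orbit_pts :: "(real \<Rightarrow> real) \<Rightarrow> nat \<Rightarrow> real \<Rightarrow> real set" where
  "orbit_pts F m p = {(F ^^ j) p | j. j < m}"

definition periodic_pt :: "(real \<Rightarrow> real) \<Rightarrow> nat \<Rightarrow> real \<Rightarrow> bool" where
  "periodic_pt F m p \<longleftrightarrow> 0 < m \<and> (F ^^ m) p = p \<and> (\<forall>j. 0 < j \<and> j < m \<longrightarrow> (F ^^ j) p \<noteq> p)"

definition attracting_periodic_pt :: "(real \<Rightarrow> real) \<Rightarrow> nat \<Rightarrow> real \<Rightarrow> bool" where
  "attracting_periodic_pt F m p \<longleftrightarrow>
     periodic_pt F m p \<and> (F ^^ m) differentiable (at p) \<and> \<bar>deriv (F ^^ m) p\<bar> < 1"

definition basin :: "(real \<Rightarrow> real) \<Rightarrow> real set \<Rightarrow> real set" where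
  "basin F Orb = {x. ((\<lambda>j. infdist ((F ^^ j) x) Orb) \<longlongrightarrow> 0) sequentially}"

definition immediate_basin :: "(real \<Rightarrow> real) \<Rightarrow> real set \<Rightarrow> real set" where
  "immediate_basin F Orb = (\<Union>q\<in>Orb. connected_component_set (basin F Orb) q)"

end

theory Submission
  imports Defs "HOL-Number_Theory.Cong"
begin

locale lsetup =
  fixes k n :: nat and g :: "real \<Rightarrow> real" and ym yp e b :: real and F :: "real \<Rightarrow> real"
  assumes b_def: "b = real k / real n"
  and F_def: "F = (\<lambda>x. x + b - g x)"
  and kpos: "0 < k" and kn: "k < n" and cop: "coprime k n"
  and g_range: "\<forall>x. 0 < g x \<and> g x < 1"
  and g_der: "\<forall>x. (g has_real_derivative deriv g x) (at x)"
  and A_pts: "ym < 0" "0 < yp"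
  and A_out: "\<forall>x. x < ym \<or> yp < x \<longrightarrow> 0 < deriv g x \<and> deriv g x < 1"
  and A_crit: "deriv g ym = 1" "deriv g yp = 1"
  and C0: "e > 0"
  and C1: "\<forall>x. x < - 1 / (2 * real n) \<longrightarrow> g x < e"
  and C2: "\<forall>x. x > 1 / (2 * real n) \<longrightarrow> g x > 1 - e"
  and C3a: "(real n - 1) * e < 1 - g yp"
  and C3b: "(real n - 1) * e < 1 / (2 * real n) - (1 - g yp + yp)"
  and C4a: "(real n - 1) * e < g ym"
  and C4b: "(real n - 1) * e < 1 / (2 * real n) - (g ym - ym)"
begin

definition labL :: "nat \<Rightarrow> int" where
  "labL i = (if (i*k) mod n \<le> k then int ((i*k) mod n) else int ((i*k) mod n) - int n)"
definition labR :: "nat \<Rightarrow> int" where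
  "labR i = (if (i*k) mod n < k then int ((i*k) mod n) else int ((i*k) mod n) - int n)"

lemma n2: "2 \<le> n" using kpos kn by linarith

lemma modstep: "((Suc i)*k) mod n = (if (i*k) mod n + k < n then (i*k) mod n + k else (i*k) mod n + k - n)"
proof -
  have a: "(i*k) mod n < n" using kn by simp
  have "((Suc i)*k) mod n = ((i*k) mod n + k) mod n" by (metis add.commute mod_add_left_eq mult_Suc)
  also have "\<dots> = (if (i*k) mod n + k < n then (i*k) mod n + k else (i*k) mod n + k - n)"
    using a kn by (auto simp: le_mod_geq intro!: mod_less) (use a in linarith)
  finally show ?thesis .
qed



lemma labL_step: "labL (Suc i) = labL i + int k - (if labL i > 0 then int n else 0)"
proof -
  define r where "r = (i*k) mod n"
  have r: "r < n" using kn by (simp add: r_def)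
  have ms: "(Suc i * k) mod n = (if r + k < n then r + k else r + k - n)" using modstep r_def by simp
  show ?thesis unfolding labL_def ms r_def[symmetric] using r kn by (auto simp: of_nat_diff split: if_splits)
qed

lemma labR_step: "labR i \<noteq> 0 \<Longrightarrow> labR (Suc i) = labR i + int k - (if labR i > 0 then int n else 0)"
proof -
  assume nz: "labR i \<noteq> 0"
  define r where "r = (i*k) mod n"
  have r: "r < n" using kn by (simp add: r_def)
  have ms: "(Suc i * k) mod n = (if r + k < n then r + k else r + k - n)" using modstep r_def by simp
  show ?thesis using nz unfolding labR_def ms r_def[symmetric] using r kn by (auto simp: of_nat_diff split: if_splits)
qed

lemma mod_nz: "0 < i \<Longrightarrow> i < n \<Longrightarrow> (i*k) mod n \<noteq> 0"
proof
  assume "0 < i" "i < n" "(i*k) mod n = 0"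
  then have "n dvd i*k" by auto
  then have "n dvd i" using cop by (simp add: coprime_commute coprime_dvd_mult_left_iff)
  then show False using \<open>0 < i\<close> \<open>i < n\<close> by (auto dest: dvd_imp_le)
qed

lemma mod_inj: "i < n \<Longrightarrow> j < n \<Longrightarrow> (i*k) mod n = (j*k) mod n \<Longrightarrow> i = j"
proof -
  assume h: "i < n" "j < n" "(i*k) mod n = (j*k) mod n"
  then have "[i*k = j*k] (mod n)" by (simp add: cong_def)
  then have "[i = j] (mod n)" using cop by (simp add: cong_mult_rcancel_nat)
  then show "i = j" using h cong_less_modulus_unique_nat by blast
qed

definition m :: nat where "m = (SOME m. 0 < m \<and> m < n \<and> (m*k) mod n = 1)"

lemma m_prop: "0 < m \<and> m < n \<and> (m*k) mod n = 1"
proof -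
  obtain x where x: "[k * x = Suc 0] (mod n)" using cong_solve_coprime_nat cop by blast
  let ?m = "x mod n"
  have "(?m * k) mod n = 1" using x n2 by (simp add: cong_def mod_mult_right_eq mult.commute)
  moreover have "?m < n" using n2 by simp
  moreover have "0 < ?m" using calculation n2 by (cases "?m = 0") auto
  ultimately have "0 < ?m \<and> ?m < n \<and> (?m*k) mod n = 1" by blast
  then show ?thesis unfolding m_def by (rule someI)
qed

lemma mpos: "0 < m" and mlt: "m < n" and mk: "(m*k) mod n = 1" using m_prop by auto

lemma nm_mod: "((n-m)*k) mod n = n - 1"
proof -
  have "((n-m)*k + m*k) mod n = 0" using mlt by (simp add: add_mult_distrib[symmetric])
  then have "(((n-m)*k) mod n + 1) mod n = 0" using mk by (metis mod_add_eq)
  moreover have "((n-m)*k) mod n < n" using n2 by simp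
  ultimately show ?thesis
  proof -
    assume h: "(((n-m)*k) mod n + 1) mod n = 0" "((n-m)*k) mod n < n"
    show ?thesis
    proof (cases "((n-m)*k) mod n + 1 < n")
      case True then show ?thesis using h by simp
    next
      case False then show ?thesis using h by linarith
    qed
  qed
qed


lemma labL_nz: "0 < i \<Longrightarrow> i < n \<Longrightarrow> labL i \<noteq> 0"
proof -
  assume "0 < i" "i < n"
  moreover define r where "r = (i*k) mod n"
  moreover have "r < n" using kn r_def by simp
  ultimately show ?thesis using mod_nz[of i] unfolding labL_def r_def[symmetric] by (auto split: if_splits)
qed

lemma labR_nz: "0 < i \<Longrightarrow> i < n \<Longrightarrow> labR i \<noteq> 0"
proof -
  assume "0 < i" "i < n"
  moreover define r where "r = (i*k) mod n"
  moreover have "r < n" using kn r_def by simp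
  ultimately show ?thesis using mod_nz[of i] unfolding labR_def r_def[symmetric] by (auto split: if_splits)
qed

lemma labL_n: "labL n = 0" unfolding labL_def by simp
lemma labR_n: "labR n = 0" unfolding labR_def using kpos by simp
lemma labL_1: "labL 1 = int k" unfolding labL_def using kn by simp
lemma labR_1: "labR 1 = int k - int n" unfolding labR_def using kn by simp
lemma labL_m: "labL m = 1" unfolding labL_def using mk kpos by simp

lemma labL_ne1: "0 < i \<Longrightarrow> i < m \<Longrightarrow> labL i \<noteq> 1"
proof
  assume h: "0 < i" "i < m" "labL i = 1"
  have "(i*k) mod n < n" using kn by simp
  then have "(i*k) mod n = 1" using h(3) unfolding labL_def by (auto split: if_splits)
  then have "i = m" using mod_inj[of i m] mk h mlt by simp
  then show False using h by simp
qed

lemma labR_nm: "labR (n-m) = -1" unfolding labR_def using nm_mod kn by simp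

lemma labR_nem1: "0 < i \<Longrightarrow> i < n - m \<Longrightarrow> labR i \<noteq> -1"
proof
  assume h: "0 < i" "i < n - m" "labR i = -1"
  have "(i*k) mod n < n" using kn by simp
  then have "(i*k) mod n = n - 1" using h(3) unfolding labR_def by (auto split: if_splits)
  then have "i = n - m" using mod_inj[of i "n-m"] nm_mod h mlt mpos by simp
  then show False using h by simp
qed

lemma rel1: "0 < i \<Longrightarrow> i \<le> m \<Longrightarrow> labR (n-m+i) = labL i - 1"
proof -
  assume h: "0 < i" "i \<le> m"
  define r where "r = (i*k) mod n"
  have r1: "1 \<le> r" "r < n" using mod_nz[of i] h mlt kn unfolding r_def by auto
  have "((n-m+i)*k) mod n = (((n-m)*k) mod n + (i*k) mod n) mod n"
    by (simp add: add_mult_distrib mod_add_eq)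
  also have "\<dots> = (n + (r - 1)) mod n" using nm_mod r1 unfolding r_def by simp
  also have "\<dots> = r - 1" using r1 by (metis add.commute mod_add_self2 mod_less less_imp_diff_less)
  finally have e: "((n-m+i)*k) mod n = r - 1" .
  show ?thesis unfolding labR_def labL_def e r_def[symmetric] using r1 by (auto simp: of_nat_diff)
qed

lemma rel2: "0 < i \<Longrightarrow> i \<le> n - m \<Longrightarrow> labL (m+i) = labR i + 1"
proof -
  assume h: "0 < i" "i \<le> n - m"
  define r where "r = (i*k) mod n"
  have r1: "r < n" using kn unfolding r_def by auto
  have "((m+i)*k) mod n = ((m*k) mod n + (i*k) mod n) mod n"
    by (simp add: add_mult_distrib mod_add_eq)
  also have "\<dots> = (1 + r) mod n" using mk unfolding r_def by simp
  finally have e: "((m+i)*k) mod n = (1 + r) mod n" .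
  show ?thesis
  proof (cases "r = n - 1")
    case True
    then have "(1 + r) mod n = 0" using n2 by simp
    then show ?thesis unfolding labR_def labL_def e r_def[symmetric] using True kn n2 by auto
  next
    case False
    then have "(1 + r) mod n = 1 + r" using r1 by simp
    then show ?thesis unfolding labR_def labL_def e r_def[symmetric] using False r1 by auto
  qed
qed

lemma npos: "0 < real n" using n2 by simp

lemma F_der: "(F has_real_derivative (1 - deriv g x)) (at x)"
  unfolding F_def using g_der by (auto intro!: derivative_eq_intros)

lemma F_cont: "isCont F x" using F_der by (rule DERIV_isCont)

lemma Fiter_cont: "isCont (F^^j) x"
proof (induction j arbitrary: x)
  case 0 then show ?case by simp
next
  case (Suc j)
  have "isCont (\<lambda>x. F ((F^^j) x)) x" by (rule isCont_o2[OF Suc F_cont])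
  then show ?case by (simp add: o_def)
qed

lemma Fiter_der: "((F^^j) has_real_derivative (\<Prod>i<j. 1 - deriv g ((F^^i) x))) (at x)"
proof (induction j)
  case 0 then show ?case by (simp add: DERIV_ident)
next
  case (Suc j)
  have "((\<lambda>x. F ((F^^j) x)) has_real_derivative (1 - deriv g ((F^^j) x)) * (\<Prod>i<j. 1 - deriv g ((F^^i) x))) (at x)"
    by (rule DERIV_chain2[OF F_der Suc])
  then show ?case by (simp add: o_def mult.commute)
qed

lemma OS:
  assumes uv: "u \<le> v" and side: "v \<le> ym \<or> yp \<le> u"
  shows "F u \<le> F v \<and> F v - F u \<le> v - u \<and> (u < v \<longrightarrow> F u < F v \<and> F v - F u < v - u)"
proof (cases "u = v")
  case True then show ?thesis by simp
next
  case False
  then have lt: "u < v" using uv by simp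
  obtain z where z: "u < z" "z < v" "F v - F u = (v - u) * (1 - deriv g z)"
    using MVT2[OF lt, of F "\<lambda>x. 1 - deriv g x"] F_der by blast
  have "z < ym \<or> yp < z" using side z by auto
  then have d: "0 < deriv g z" "deriv g z < 1" using A_out by auto
  have "0 < (v - u) * (1 - deriv g z)" using lt d by simp
  moreover have "(v - u) * (1 - deriv g z) < v - u" using lt d by (simp add: mult_less_cancel_left1)
  ultimately show ?thesis using z lt by simp
qed

lemma track:
  fixes lab :: "nat \<Rightarrow> int"
  assumes z: "z = real_of_int (lab 0) / real n + s0"
  and labs: "\<forall>i<j. lab i \<noteq> 0 \<and> lab (Suc i) = lab i + int k - (if lab i > 0 then int n else 0)"
  and win: "\<forall>i<j. \<bar>s0\<bar> + real i * e < 1 / (2 * real n)"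
  shows "i \<le> j \<Longrightarrow> \<bar>(F^^i) z - real_of_int (lab i) / real n - s0\<bar> \<le> real i * e"
proof (induction i)
  case 0 then show ?case using z by simp
next
  case (Suc i)
  then have ij: "i < j" by simp
  define x where "x = (F^^i) z"
  define s where "s = x - real_of_int (lab i) / real n"
  have IH: "\<bar>s - s0\<bar> \<le> real i * e" using Suc ij unfolding s_def x_def by simp
  have sw: "\<bar>s\<bar> < 1 / (2 * real n)" using IH win ij by auto
  have nz: "lab i \<noteq> 0" and ls: "lab (Suc i) = lab i + int k - (if lab i > 0 then int n else 0)"
    using labs ij by auto
  have Fx: "(F^^Suc i) z = x + real k / real n - g x" unfolding x_def F_def b_def by simp
  have xs: "x = real_of_int (lab i) / real n + s" unfolding s_def by simp
  have half: "1 / (2 * real n) = (1 / real n) / 2" by simp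
  show ?case
  proof (cases "lab i > 0")
    case True
    then have "real_of_int (lab i) \<ge> 1" by simp
    then have "real_of_int (lab i) / real n \<ge> 1 / real n" using npos by (simp add: divide_right_mono)
    then have "x > 1 / (2 * real n)" using xs sw half by linarith
    then have gx: "1 - e < g x" "g x < 1" using C2 g_range by auto
    have "real_of_int (lab (Suc i)) / real n = real_of_int (lab i) / real n + real k / real n - 1"
      using ls True npos by (simp add: field_simps)
    then have "(F^^Suc i) z - real_of_int (lab (Suc i)) / real n - s0 = (s - s0) + (1 - g x)"
      using Fx xs by simp
    then show ?thesis using IH gx by (simp add: algebra_simps)
  next
    case False
    then have "real_of_int (lab i) \<le> -1" using nz by simp
    then have "real_of_int (lab i) / real n \<le> -1 / real n" using npos divide_right_mono[of "real_of_int (lab i)" "-1" "real n"] by simp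
    then have "x < - 1 / (2 * real n)" using xs sw half by (simp add: field_simps)
    then have gx: "g x < e" "0 < g x" using C1 g_range by auto
    have "real_of_int (lab (Suc i)) / real n = real_of_int (lab i) / real n + real k / real n"
      using ls False npos by (simp add: field_simps)
    then have "(F^^Suc i) z - real_of_int (lab (Suc i)) / real n - s0 = (s - s0) - g x"
      using Fx xs by simp
    then show ?thesis using IH gx by (simp add: algebra_simps)
  qed
qed

lemma real_i1: "0 < i \<Longrightarrow> i \<le> n \<Longrightarrow> real (i - 1) * e \<le> (real n - 1) * e"
  using C0 by (intro mult_right_mono) (auto simp: of_nat_diff)

lemma trackL: "0 < i \<Longrightarrow> i \<le> n \<Longrightarrow> \<bar>(F^^i) ym - real_of_int (labL i) / real n - (ym - g ym)\<bar> \<le> real (i-1) * e"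
proof -
  assume i: "0 < i" "i \<le> n"
  have z: "F ym = real_of_int ((\<lambda>i. labL (Suc i)) 0) / real n + (ym - g ym)"
    using labL_1 unfolding F_def b_def by simp
  have labs: "\<forall>i<n-1. (\<lambda>i. labL (Suc i)) i \<noteq> 0 \<and> (\<lambda>i. labL (Suc i)) (Suc i) = (\<lambda>i. labL (Suc i)) i + int k - (if (\<lambda>i. labL (Suc i)) i > 0 then int n else 0)"
  proof (intro allI impI conjI)
    fix i assume i: "i < n - 1"
    show "(\<lambda>i. labL (Suc i)) i \<noteq> 0" using labL_nz[of "Suc i"] i by simp
    then show "(\<lambda>i. labL (Suc i)) (Suc i) = (\<lambda>i. labL (Suc i)) i + int k - (if (\<lambda>i. labL (Suc i)) i > 0 then int n else 0)"
      using labL_step[of "Suc i"] by simp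
  qed
  have gy: "0 < g ym" using g_range by auto
  have win: "\<forall>i<n-1. \<bar>ym - g ym\<bar> + real i * e < 1 / (2 * real n)"
  proof (intro allI impI)
    fix i assume "i < n - 1"
    then have "real i * e \<le> (real n - 1) * e" using C0 by (intro mult_right_mono) auto
    then show "\<bar>ym - g ym\<bar> + real i * e < 1 / (2 * real n)" using C4b A_pts gy by auto
  qed
  have "\<bar>(F^^(i-1)) (F ym) - real_of_int ((\<lambda>i. labL (Suc i)) (i-1)) / real n - (ym - g ym)\<bar> \<le> real (i-1) * e"
    by (rule track[OF z labs win]) (use i in simp)
  moreover have "(F^^(i-1)) (F ym) = (F^^i) ym" using i
    by (metis Suc_diff_1 comp_apply funpow_Suc_right)
  ultimately show ?thesis using i by simp
qed

lemma trackR: "0 < i \<Longrightarrow> i \<le> n \<Longrightarrow> \<bar>(F^^i) yp - real_of_int (labR i) / real n - (yp + 1 - g yp)\<bar> \<le> real (i-1) * e"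
proof -
  assume i: "0 < i" "i \<le> n"
  have z: "F yp = real_of_int ((\<lambda>i. labR (Suc i)) 0) / real n + (yp + 1 - g yp)"
    using labR_1 npos unfolding F_def b_def by (simp add: field_simps)
  have labs: "\<forall>i<n-1. (\<lambda>i. labR (Suc i)) i \<noteq> 0 \<and> (\<lambda>i. labR (Suc i)) (Suc i) = (\<lambda>i. labR (Suc i)) i + int k - (if (\<lambda>i. labR (Suc i)) i > 0 then int n else 0)"
  proof (intro allI impI conjI)
    fix i assume i: "i < n - 1"
    show "(\<lambda>i. labR (Suc i)) i \<noteq> 0" using labR_nz[of "Suc i"] i by simp
    then show "(\<lambda>i. labR (Suc i)) (Suc i) = (\<lambda>i. labR (Suc i)) i + int k - (if (\<lambda>i. labR (Suc i)) i > 0 then int n else 0)"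
      using labR_step[of "Suc i"] by simp
  qed
  have gy: "g yp < 1" using g_range by auto
  have win: "\<forall>i<n-1. \<bar>yp + 1 - g yp\<bar> + real i * e < 1 / (2 * real n)"
  proof (intro allI impI)
    fix i assume "i < n - 1"
    then have "real i * e \<le> (real n - 1) * e" using C0 by (intro mult_right_mono) auto
    then show "\<bar>yp + 1 - g yp\<bar> + real i * e < 1 / (2 * real n)" using C3b A_pts gy by auto
  qed
  have "\<bar>(F^^(i-1)) (F yp) - real_of_int ((\<lambda>i. labR (Suc i)) (i-1)) / real n - (yp + 1 - g yp)\<bar> \<le> real (i-1) * e"
    by (rule track[OF z labs win]) (use i in simp)
  moreover have "(F^^(i-1)) (F yp) = (F^^i) yp" using i
    by (metis Suc_diff_1 comp_apply funpow_Suc_right)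
  ultimately show ?thesis using i by simp
qed

lemma sL: "0 < i \<Longrightarrow> i \<le> n \<Longrightarrow> -1/(2*real n) < (F^^i) ym - real_of_int (labL i) / real n \<and> (F^^i) ym - real_of_int (labL i) / real n < 0"
proof -
  assume i: "0 < i" "i \<le> n"
  have t: "\<bar>(F^^i) ym - real_of_int (labL i) / real n - (ym - g ym)\<bar> \<le> real (i-1) * e" by (rule trackL[OF i])
  have r: "real (i - 1) * e \<le> (real n - 1) * e" by (rule real_i1[OF i])
  from t have t1: "(F^^i) ym - real_of_int (labL i) / real n - (ym - g ym) \<le> real (i-1) * e"
    and t2: "-((F^^i) ym - real_of_int (labL i) / real n - (ym - g ym)) \<le> real (i-1) * e" by linarith+
  show ?thesis using t1 t2 r C4a C4b A_pts(1) by linarith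
qed

lemma sR: "0 < i \<Longrightarrow> i \<le> n \<Longrightarrow> 0 < (F^^i) yp - real_of_int (labR i) / real n \<and> (F^^i) yp - real_of_int (labR i) / real n < 1/(2*real n)"
proof -
  assume i: "0 < i" "i \<le> n"
  have t: "\<bar>(F^^i) yp - real_of_int (labR i) / real n - (yp + 1 - g yp)\<bar> \<le> real (i-1) * e" by (rule trackR[OF i])
  have r: "real (i - 1) * e \<le> (real n - 1) * e" by (rule real_i1[OF i])
  from t have t1: "(F^^i) yp - real_of_int (labR i) / real n - (yp + 1 - g yp) \<le> real (i-1) * e"
    and t2: "-((F^^i) yp - real_of_int (labR i) / real n - (yp + 1 - g yp)) \<le> real (i-1) * e" by linarith+
  show ?thesis using t1 t2 r C3a C3b A_pts(2) by linarith
qed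

lemma FnL: "(F^^n) ym < ym"
proof -
  have i: "0 < n" "n \<le> n" using n2 by auto
  have t: "\<bar>(F^^n) ym - real_of_int (labL n) / real n - (ym - g ym)\<bar> \<le> real (n-1) * e" by (rule trackL[OF i])
  have r: "real (n - 1) * e \<le> (real n - 1) * e" by (rule real_i1[OF i])
  from t have t1: "(F^^n) ym - (ym - g ym) \<le> real (n-1) * e" using labL_n by simp
  show ?thesis using t1 r C4a by linarith
qed

lemma FnR: "(F^^n) yp > yp"
proof -
  have i: "0 < n" "n \<le> n" using n2 by auto
  have t: "\<bar>(F^^n) yp - real_of_int (labR n) / real n - (yp + 1 - g yp)\<bar> \<le> real (n-1) * e" by (rule trackR[OF i])
  have r: "real (n - 1) * e \<le> (real n - 1) * e" by (rule real_i1[OF i])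
  from t have t1: "-((F^^n) yp - (yp + 1 - g yp)) \<le> real (n-1) * e" using labR_n by simp
  show ?thesis using t1 r C3a by linarith
qed

definition Good :: "real \<Rightarrow> real \<Rightarrow> bool" where
  "Good u v \<longleftrightarrow> u \<le> v \<and> (1/(2*real n) < u \<or> v < -1/real n)"

lemma good:
  fixes l :: int
  assumes "l \<noteq> 0" "l \<noteq> 1" "0 < sr" "sr < 1/(2*real n)" "-1/(2*real n) < sl" "sl < 0"
  shows "Good ((real_of_int l - 1)/real n + sr) (real_of_int l/real n + sl)"
proof -
  have h: "1/(2*real n) = (1/real n)/2" by simp
  have "(real_of_int l - 1)/real n = real_of_int l/real n - 1/real n" by (simp add: diff_divide_distrib)
  then have le: "(real_of_int l - 1)/real n + sr \<le> real_of_int l/real n + sl" using assms h by linarith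
  show ?thesis
  proof (cases "l \<ge> 2")
    case True
    then have "real_of_int l - 1 \<ge> 1" by simp
    then have "(real_of_int l - 1)/real n \<ge> 1/real n" using npos by (intro divide_right_mono) auto
    then show ?thesis unfolding Good_def using le assms h by linarith
  next
    case False
    then have "real_of_int l \<le> -1" using assms by simp
    then have "real_of_int l/real n \<le> -1/real n" using npos by (intro divide_right_mono) auto
    then show ?thesis unfolding Good_def using le assms by linarith
  qed
qed

lemma monI:
  assumes side: "\<forall>i<j. (F^^i) hi \<le> ym \<or> yp \<le> (F^^i) lo"
  shows "i \<le> j \<Longrightarrow> lo \<le> x \<Longrightarrow> x \<le> x' \<Longrightarrow> x' \<le> hi \<Longrightarrow>
    (F^^i) lo \<le> (F^^i) x \<and> (F^^i) x \<le> (F^^i) x' \<and> (F^^i) x' \<le> (F^^i) hi \<and>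
    (F^^i) x' - (F^^i) x \<le> x' - x \<and> (0 < i \<longrightarrow> x < x' \<longrightarrow> (F^^i) x' - (F^^i) x < x' - x)"
proof (induction i)
  case 0 then show ?case by simp
next
  case (Suc i)
  then have ij: "i < j" by simp
  define A where "A = (F^^i) lo"
  define X where "X = (F^^i) x"
  define X' where "X' = (F^^i) x'"
  define B where "B = (F^^i) hi"
  have IH: "A \<le> X \<and> X \<le> X' \<and> X' \<le> B \<and> X' - X \<le> x' - x \<and> (0 < i \<longrightarrow> x < x' \<longrightarrow> X' - X < x' - x)"
    using Suc ij unfolding A_def X_def X'_def B_def by simp
  have sd: "B \<le> ym \<or> yp \<le> A" using side ij unfolding A_def B_def by simp
  have o1: "F A \<le> F X" using OS[of A X] IH sd by auto
  have o2: "F X \<le> F X' \<and> F X' - F X \<le> X' - X \<and> (X < X' \<longrightarrow> F X' - F X < X' - X)" using OS[of X X'] IH sd by auto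
  have o3: "F X' \<le> F B" using OS[of X' B] IH sd by auto
  have st: "x < x' \<longrightarrow> F X' - F X < x' - x"
  proof
    assume "x < x'"
    show "F X' - F X < x' - x"
    proof (cases "X < X'")
      case True then show ?thesis using o2 IH by linarith
    next
      case False then have "X = X'" using IH by simp
      then show ?thesis using \<open>x < x'\<close> by simp
    qed
  qed
  show ?case using o1 o2 o3 IH st unfolding A_def X_def X'_def B_def by simp
qed

definition aL :: real where "aL = (F^^(n-m)) yp"
definition bR :: real where "bR = (F^^m) ym"

lemma fpa: "(F^^i) ((F^^j) x) = (F^^(i+j)) x" by (simp add: funpow_add)

lemma ne_nonneg: "0 \<le> (real n - 1) * e" using n2 C0 by simp
lemma ym_gt: "-1/(2*real n) < ym"
  using C4b ne_nonneg g_range[rule_format, of ym] by linarith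
lemma yp_lt: "yp < 1/(2*real n)"
  using C3b ne_nonneg g_range[rule_format, of yp] by linarith
lemma half_id: "-1/real n + 1/(2*real n) = -1/(2*real n)" "1/real n - 1/(2*real n) = 1/(2*real n)"
  using npos by (simp_all add: field_simps)

lemma aL_eq: "aL = -1/real n + ((F^^(n-m)) yp - real_of_int (labR (n-m)) / real n)"
  unfolding aL_def using labR_nm by simp
lemma bR_eq: "bR = 1/real n + ((F^^m) ym - real_of_int (labL m) / real n)"
  unfolding bR_def using labL_m by simp

lemma aL_b: "-1/real n < aL \<and> aL < -1/(2*real n)"
  using aL_eq sR[of "n-m"] mlt mpos half_id by simp
lemma bR_b: "1/(2*real n) < bR \<and> bR < 1/real n"
  using bR_eq sL[of "m"] mlt mpos half_id by simp

lemma aL_ym: "aL < ym" using aL_b ym_gt by linarith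
lemma yp_bR: "yp < bR" using bR_b yp_lt by linarith

lemma Good_side: "Good u v \<Longrightarrow> v \<le> ym \<or> yp \<le> u"
proof -
  assume "Good u v"
  moreover have "-1/real n < -1/(2*real n)" using npos by (simp add: field_simps)
  ultimately show ?thesis unfolding Good_def using ym_gt yp_lt by linarith
qed

lemma GoodL: "0 < i \<Longrightarrow> i < m \<Longrightarrow> Good ((F^^i) aL) ((F^^i) ym)"
proof -
  assume i: "0 < i" "i < m"
  have e1: "(F^^i) aL = (F^^(n-m+i)) yp" unfolding aL_def fpa by (simp add: add.commute)
  have l: "real_of_int (labR (n-m+i)) = real_of_int (labL i) - 1" using rel1[of i] i by simp
  have r1: "0 < (F^^(n-m+i)) yp - real_of_int (labR (n-m+i)) / real n \<and> (F^^(n-m+i)) yp - real_of_int (labR (n-m+i)) / real n < 1/(2*real n)"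
    using sR[of "n-m+i"] i mlt by simp
  have r2: "-1/(2*real n) < (F^^i) ym - real_of_int (labL i) / real n \<and> (F^^i) ym - real_of_int (labL i) / real n < 0"
    using sL[of i] i mlt by simp
  have nz: "labL i \<noteq> 0" "labL i \<noteq> 1" using labL_nz[of i] labL_ne1[of i] i mlt by auto
  have "Good ((real_of_int (labL i) - 1)/real n + ((F^^(n-m+i)) yp - real_of_int (labR (n-m+i)) / real n))
             (real_of_int (labL i)/real n + ((F^^i) ym - real_of_int (labL i) / real n))"
    by (rule good) (use nz r1 r2 in auto)
  then show ?thesis using e1 l by simp
qed

lemma GoodR: "0 < i \<Longrightarrow> i < n - m \<Longrightarrow> Good ((F^^i) yp) ((F^^i) bR)"
proof -
  assume i: "0 < i" "i < n - m"
  have e1: "(F^^i) bR = (F^^(m+i)) ym" unfolding bR_def fpa by (simp add: add.commute)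
  have l: "real_of_int (labL (m+i)) = real_of_int (labR i + 1)" using rel2[of i] i by simp
  have r1: "0 < (F^^i) yp - real_of_int (labR i) / real n \<and> (F^^i) yp - real_of_int (labR i) / real n < 1/(2*real n)"
    using sR[of i] i by simp
  have r2: "-1/(2*real n) < (F^^(m+i)) ym - real_of_int (labL (m+i)) / real n \<and> (F^^(m+i)) ym - real_of_int (labL (m+i)) / real n < 0"
    using sL[of "m+i"] i mlt by simp
  have nz: "labR i + 1 \<noteq> 0" "labR i + 1 \<noteq> 1" using labR_nz[of i] labR_nem1[of i] i by auto
  have "Good ((real_of_int (labR i + 1) - 1)/real n + ((F^^i) yp - real_of_int (labR i) / real n))
             (real_of_int (labR i + 1)/real n + ((F^^(m+i)) ym - real_of_int (labL (m+i)) / real n))"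
    by (rule good) (use nz r1 r2 in auto)
  then show ?thesis using e1 l by simp
qed

lemma sideL: "\<forall>i<m. (F^^i) ym \<le> ym \<or> yp \<le> (F^^i) aL"
proof (intro allI impI)
  fix i assume "i < m"
  show "(F^^i) ym \<le> ym \<or> yp \<le> (F^^i) aL"
  proof (cases "i = 0")
    case True then show ?thesis by simp
  next
    case False then show ?thesis using GoodL[of i] \<open>i < m\<close> Good_side by auto
  qed
qed

lemma sideR: "\<forall>i<n-m. (F^^i) bR \<le> ym \<or> yp \<le> (F^^i) yp"
proof (intro allI impI)
  fix i assume "i < n - m"
  show "(F^^i) bR \<le> ym \<or> yp \<le> (F^^i) yp"
  proof (cases "i = 0")
    case True then show ?thesis by simp
  next
    case False then show ?thesis using GoodR[of i] \<open>i < n - m\<close> Good_side by auto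
  qed
qed

lemmas monL = monI[OF sideL]
lemmas monR = monI[OF sideR]

lemma mapL: "aL \<le> x \<Longrightarrow> x \<le> ym \<Longrightarrow> yp < (F^^m) x \<and> (F^^m) x \<le> bR"
proof -
  assume x: "aL \<le> x" "x \<le> ym"
  have "(F^^m) aL \<le> (F^^m) x \<and> (F^^m) x \<le> (F^^m) ym" using monL[of m x x] x by simp
  moreover have "(F^^m) aL = (F^^n) yp" unfolding aL_def fpa using mlt by simp
  ultimately show ?thesis using FnR unfolding bR_def by simp
qed

lemma mapR: "yp \<le> x \<Longrightarrow> x \<le> bR \<Longrightarrow> aL \<le> (F^^(n-m)) x \<and> (F^^(n-m)) x < ym"
proof -
  assume x: "yp \<le> x" "x \<le> bR"
  have "(F^^(n-m)) yp \<le> (F^^(n-m)) x \<and> (F^^(n-m)) x \<le> (F^^(n-m)) bR" using monR[of "n-m" x x] x by simp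
  moreover have "(F^^(n-m)) bR = (F^^n) ym" unfolding bR_def fpa using mlt by simp
  ultimately show ?thesis using FnL unfolding aL_def by simp
qed
end

context lsetup begin

lemma contrL: "aL \<le> x \<Longrightarrow> x \<le> x' \<Longrightarrow> x' \<le> ym \<Longrightarrow> r \<le> n \<Longrightarrow>
  (F^^r) x \<le> (F^^r) x' \<and> (F^^r) x' - (F^^r) x \<le> x' - x \<and> (r = n \<longrightarrow> x < x' \<longrightarrow> (F^^r) x' - (F^^r) x < x' - x)"
proof -
  assume h: "aL \<le> x" "x \<le> x'" "x' \<le> ym" "r \<le> n"
  have A: "(F^^m) x \<le> (F^^m) x' \<and> (F^^m) x' - (F^^m) x \<le> x' - x \<and> (x < x' \<longrightarrow> (F^^m) x' - (F^^m) x < x' - x)"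
    using monL[of m x x'] h mpos by simp
  show ?thesis
  proof (cases "r \<le> m")
    case True
    then show ?thesis using monL[of r x x'] h mlt by auto
  next
    case False
    define t where "t = r - m"
    have r: "r = t + m" "t \<le> n - m" using False h unfolding t_def by auto
    have X: "yp < (F^^m) x \<and> (F^^m) x \<le> bR" "yp < (F^^m) x' \<and> (F^^m) x' \<le> bR"
      using mapL h aL_ym by (meson order_trans)+
    have B: "(F^^t) ((F^^m) x) \<le> (F^^t) ((F^^m) x') \<and> (F^^t) ((F^^m) x') - (F^^t) ((F^^m) x) \<le> (F^^m) x' - (F^^m) x"
      using monR[of t "(F^^m) x" "(F^^m) x'"] r X A by simp
    have "(F^^r) x = (F^^t) ((F^^m) x)" "(F^^r) x' = (F^^t) ((F^^m) x')" using r fpa by auto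
    then show ?thesis using A B by auto
  qed
qed

lemma Fn_JL: "aL \<le> x \<Longrightarrow> x \<le> ym \<Longrightarrow> aL \<le> (F^^n) x \<and> (F^^n) x < ym"
proof -
  assume h: "aL \<le> x" "x \<le> ym"
  have "(F^^n) x = (F^^(n-m)) ((F^^m) x)" using fpa mlt by simp
  then show ?thesis using mapL[OF h] mapR by auto
qed

definition p :: real where "p = (SOME p. aL \<le> p \<and> p \<le> ym \<and> (F^^n) p = p)"

lemma p_prop: "aL \<le> p \<and> p < ym \<and> (F^^n) p = p"
proof -
  have "\<exists>x. aL \<le> x \<and> x \<le> ym \<and> (\<lambda>x. (F^^n) x - x) x = 0"
  proof (rule IVT2)
    show "(F^^n) ym - ym \<le> 0" using FnL by simp
    show "0 \<le> (F^^n) aL - aL" using Fn_JL[of aL] aL_ym by simp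
    show "aL \<le> ym" using aL_ym by simp
    show "\<forall>x. aL \<le> x \<and> x \<le> ym \<longrightarrow> isCont (\<lambda>x. (F ^^ n) x - x) x"
      using Fiter_cont by (auto intro!: continuous_intros)
  qed
  then have "\<exists>x. aL \<le> x \<and> x \<le> ym \<and> (F^^n) x = x" by auto
  then have "aL \<le> p \<and> p \<le> ym \<and> (F^^n) p = p" unfolding p_def by (rule someI_ex)
  moreover have "p \<noteq> ym" using calculation FnL by auto
  ultimately show ?thesis by auto
qed

lemma p_uniq: "aL \<le> x \<Longrightarrow> x \<le> ym \<Longrightarrow> (F^^n) x = x \<Longrightarrow> x = p"
proof (rule ccontr)
  assume h: "aL \<le> x" "x \<le> ym" "(F^^n) x = x" "x \<noteq> p"
  show False
  proof (cases "x < p")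
    case True then show False using contrL[of x p n] h p_prop by auto
  next
    case False then show False using contrL[of p x n] h p_prop by auto
  qed
qed


lemma orbit_pos: "0 < i \<Longrightarrow> i < n \<Longrightarrow> (F^^i) p < -1/real n \<or> yp < (F^^i) p"
proof -
  assume i: "0 < i" "i < n"
  have pj: "aL \<le> p" "p \<le> ym" using p_prop by auto
  consider (a) "i < m" | (b) "i = m" | (c) "m < i" by linarith
  then show ?thesis
  proof cases
    case a
    have "(F^^i) aL \<le> (F^^i) p \<and> (F^^i) p \<le> (F^^i) ym" using monL[of i p p] pj a by simp
    moreover have "Good ((F^^i) aL) ((F^^i) ym)" using GoodL[of i] a i by simp
    ultimately show ?thesis unfolding Good_def using yp_lt by linarith
  next
    case b then show ?thesis using mapL[OF pj] by simp
  next
    case c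
    define t where "t = i - m"
    have t: "0 < t" "t < n - m" "i = t + m" using c i unfolding t_def by auto
    have q: "yp < (F^^m) p \<and> (F^^m) p \<le> bR" using mapL[OF pj] by simp
    have "(F^^t) yp \<le> (F^^t) ((F^^m) p) \<and> (F^^t) ((F^^m) p) \<le> (F^^t) bR"
      using monR[of t "(F^^m) p" "(F^^m) p"] q t by simp
    moreover have "Good ((F^^t) yp) ((F^^t) bR)" using GoodR[of t] t by simp
    moreover have "(F^^i) p = (F^^t) ((F^^m) p)" using fpa t by simp
    ultimately show ?thesis unfolding Good_def using yp_lt by linarith
  qed
qed

lemma orbit_lap: "i < n \<Longrightarrow> (F^^i) p < ym \<or> yp < (F^^i) p"
proof -
  assume i: "i < n"
  have "-1/real n < ym" using aL_b aL_ym by linarith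
  then show ?thesis using orbit_pos[of i] i p_prop by (cases "i = 0") auto
qed

lemma orbit_ne: "0 < i \<Longrightarrow> i < n \<Longrightarrow> (F^^i) p \<noteq> p"
  using orbit_pos[of i] p_prop aL_b A_pts by force

lemma prod01: fixes f :: "nat \<Rightarrow> real" and j :: nat shows "(\<forall>i<j. 0 < f i \<and> f i < (1::real)) \<Longrightarrow> 0 < j \<Longrightarrow> 0 < (\<Prod>i<j. f i) \<and> (\<Prod>i<j. f i) < 1"
proof (induction j)
  case 0 then show ?case by simp
next
  case (Suc j)
  show ?case
  proof (cases "j = 0")
    case True then show ?thesis using Suc by simp
  next
    case False
    then have IH: "0 < (\<Prod>i<j. f i) \<and> (\<Prod>i<j. f i) < 1" using Suc by simp
    have "0 < f j" "f j < 1" using Suc by auto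
    then have "0 < (\<Prod>i<j. f i) * f j" "(\<Prod>i<j. f i) * f j < 1" using IH
      by (auto intro: mult_pos_pos) (smt (verit) mult_less_cancel_right2)
    then show ?thesis by simp
  qed
qed

lemma attracting: "attracting_periodic_pt F n p"
proof -
  have D: "((F^^n) has_real_derivative (\<Prod>i<n. 1 - deriv g ((F^^i) p))) (at p)" by (rule Fiter_der)
  have fac: "\<forall>i<n. 0 < 1 - deriv g ((F^^i) p) \<and> 1 - deriv g ((F^^i) p) < 1"
    using orbit_lap A_out by auto
  have pr: "0 < (\<Prod>i<n. 1 - deriv g ((F^^i) p)) \<and> (\<Prod>i<n. 1 - deriv g ((F^^i) p)) < 1"
    by (rule prod01[OF fac]) (use n2 in simp)
  have "(F^^n) differentiable (at p)"
    using D unfolding has_field_derivative_def by (rule differentiableI)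
  moreover have "deriv (F^^n) p = (\<Prod>i<n. 1 - deriv g ((F^^i) p))" using D by (rule DERIV_imp_deriv)
  moreover have "periodic_pt F n p" unfolding periodic_pt_def using orbit_ne p_prop n2 by auto
  ultimately show ?thesis unfolding attracting_periodic_pt_def using pr by simp
qed

definition Orb where "Orb = orbit_pts F n p"

lemma Fnq_p: "(F^^(n*q)) p = p"
proof (induction q)
  case 0 then show ?case by simp
next
  case (Suc q)
  have "(F^^(n*Suc q)) p = (F^^n) ((F^^(n*q)) p)" using fpa by (simp add: add.commute)
  then show ?case using Suc p_prop by simp
qed

lemma Fj_split: "(F^^j) x = (F^^(j mod n)) ((F^^(n*(j div n))) x)"
  using fpa[of "j mod n" "n*(j div n)" x] by (simp add: mod_mult_div_eq)

lemma Fp_in: "(F^^j) p \<in> Orb"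
proof -
  have "(F^^j) p = (F^^(j mod n)) p" using Fj_split[of j p] Fnq_p by simp
  moreover have "j mod n < n" using n2 by simp
  ultimately show ?thesis unfolding Orb_def orbit_pts_def by blast
qed

lemma Phi_step: "aL \<le> y \<Longrightarrow> y \<le> ym \<Longrightarrow> (y \<le> p \<longrightarrow> y \<le> (F^^n) y \<and> (F^^n) y \<le> p) \<and> (p \<le> y \<longrightarrow> p \<le> (F^^n) y \<and> (F^^n) y \<le> y)"
proof -
  assume y: "aL \<le> y" "y \<le> ym"
  have pp: "aL \<le> p" "p \<le> ym" "(F^^n) p = p" using p_prop by auto
  show ?thesis
  proof (intro conjI impI)
    assume "y \<le> p"
    then show "y \<le> (F^^n) y" "(F^^n) y \<le> p" using contrL[of y p n] y pp by (cases "y = p"; force)+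
  next
    assume "p \<le> y"
    then show "p \<le> (F^^n) y" "(F^^n) y \<le> y" using contrL[of p y n] y pp by (cases "y = p"; force)+
  qed
qed

lemma conv: "aL \<le> x \<Longrightarrow> x \<le> ym \<Longrightarrow> (\<lambda>i. (F^^(n*i)) x) \<longlonglongrightarrow> p"
proof -
  assume x: "aL \<le> x" "x \<le> ym"
  define u where "u i = (F^^(n*i)) x" for i
  have uS: "u (Suc i) = (F^^n) (u i)" for i unfolding u_def using fpa by (simp add: add.commute)
  have inJ: "aL \<le> u i \<and> u i \<le> ym" for i
  proof (induction i)
    case 0 then show ?case using x unfolding u_def by simp
  next
    case (Suc i) then show ?case using Fn_JL[of "u i"] uS by auto
  qed
  have mono: "monoseq u"
  proof (cases "x \<le> p")
    case True
    have "u i \<le> p \<and> u i \<le> u (Suc i)" for i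
    proof (induction i)
      case 0 then show ?case using True Phi_step[of x] x uS unfolding u_def by auto
    next
      case (Suc i)
      have a: "u (Suc i) = (F^^n) (u i)" "u (Suc (Suc i)) = (F^^n) (u (Suc i))" using uS by auto
      show ?case using Phi_step[of "u i"] Phi_step[of "u (Suc i)"] inJ[of i] inJ[of "Suc i"] Suc a by simp
    qed
    then show ?thesis unfolding monoseq_Suc by auto
  next
    case False
    have "p \<le> u i \<and> u (Suc i) \<le> u i" for i
    proof (induction i)
      case 0 then show ?case using False Phi_step[of x] x uS unfolding u_def by auto
    next
      case (Suc i)
      have a: "u (Suc i) = (F^^n) (u i)" "u (Suc (Suc i)) = (F^^n) (u (Suc i))" using uS by auto
      show ?case using Phi_step[of "u i"] Phi_step[of "u (Suc i)"] inJ[of i] inJ[of "Suc i"] Suc a by simp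
    qed
    then show ?thesis unfolding monoseq_Suc by auto
  qed
  have bs: "Bseq u"
  proof (rule BseqI')
    fix i show "norm (u i) \<le> \<bar>aL\<bar> + \<bar>ym\<bar>" using inJ[of i] by auto
  qed
  obtain l where l: "u \<longlonglongrightarrow> l" using Bseq_monoseq_convergent[OF bs mono] by (auto simp: convergent_def)
  have lJ: "aL \<le> l" "l \<le> ym" using inJ by (auto intro!: LIMSEQ_le_const[OF l] LIMSEQ_le_const2[OF l])
  have "(\<lambda>i. (F^^n) (u i)) \<longlonglongrightarrow> (F^^n) l" by (rule isCont_tendsto_compose[OF Fiter_cont l])
  moreover have "(\<lambda>i. (F^^n) (u i)) \<longlonglongrightarrow> l" using LIMSEQ_Suc[OF l] uS by simp
  ultimately have "(F^^n) l = l" using LIMSEQ_unique by blast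
  then have "l = p" using p_uniq lJ by blast
  then show ?thesis using l unfolding u_def by simp
qed

lemma div_tendsto: assumes "u \<longlonglongrightarrow> (c::real)" shows "(\<lambda>j. \<bar>u (j div n) - c\<bar>) \<longlonglongrightarrow> 0"
proof (rule LIMSEQ_I)
  fix r :: real assume r: "0 < r"
  obtain N where N: "\<forall>i\<ge>N. norm (u i - c) < r" using LIMSEQ_D[OF assms r] by blast
  have "\<forall>j\<ge>N*n. norm (\<bar>u (j div n) - c\<bar> - 0) < r"
  proof (intro allI impI)
    fix j assume "N*n \<le> j"
    then have "N*n div n \<le> j div n" by (rule div_le_mono)
    then have "N \<le> j div n" using n2 by simp
    then show "norm (\<bar>u (j div n) - c\<bar> - 0) < r" using N by simp
  qed
  then show "\<exists>no. \<forall>j\<ge>no. norm (\<bar>u (j div n) - c\<bar> - 0) < r" by blast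
qed

lemma basinL: "aL \<le> x \<Longrightarrow> x \<le> ym \<Longrightarrow> x \<in> basin F Orb"
proof -
  assume x: "aL \<le> x" "x \<le> ym"
  define u where "u i = (F^^(n*i)) x" for i
  have inJ: "aL \<le> u i \<and> u i \<le> ym" for i
  proof (induction i)
    case 0 then show ?case using x unfolding u_def by simp
  next
    case (Suc i)
    have "u (Suc i) = (F^^n) (u i)" unfolding u_def using fpa by (simp add: add.commute)
    then show ?case using Fn_JL[of "u i"] Suc by auto
  qed
  have pp: "aL \<le> p" "p \<le> ym" using p_prop by auto
  have bound: "norm (infdist ((F^^j) x) Orb) \<le> \<bar>u (j div n) - p\<bar>" for j
  proof -
    have r: "j mod n \<le> n" using n2 by simp
    have e1: "(F^^j) x = (F^^(j mod n)) (u (j div n))" unfolding u_def by (rule Fj_split)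
    have e2: "(F^^j) p = (F^^(j mod n)) p" using Fj_split[of j p] Fnq_p by simp
    have c: "\<bar>(F^^(j mod n)) (u (j div n)) - (F^^(j mod n)) p\<bar> \<le> \<bar>u (j div n) - p\<bar>"
    proof (cases "u (j div n) \<le> p")
      case True then show ?thesis using contrL[of "u (j div n)" p "j mod n"] inJ pp r by auto
    next
      case False then show ?thesis using contrL[of p "u (j div n)" "j mod n"] inJ pp r by auto
    qed
    have "infdist ((F^^j) x) Orb \<le> dist ((F^^j) x) ((F^^j) p)" by (rule infdist_le[OF Fp_in])
    moreover have "0 \<le> infdist ((F^^j) x) Orb" by (rule infdist_nonneg)
    ultimately show ?thesis using c e1 e2 by (simp add: dist_real_def)
  qed
  have "(\<lambda>j. infdist ((F^^j) x) Orb) \<longlonglongrightarrow> 0"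
    by (rule Lim_null_comparison[OF always_eventually[OF allI[OF bound]] div_tendsto[OF conv[OF x, folded u_def]]])
  then show ?thesis unfolding basin_def by simp
qed

lemma basinR: "yp \<le> x \<Longrightarrow> x \<le> bR \<Longrightarrow> x \<in> basin F Orb"
proof -
  assume x: "yp \<le> x" "x \<le> bR"
  define y where "y = (F^^(n-m)) x"
  have "aL \<le> y" "y \<le> ym" using mapR[OF x] unfolding y_def by auto
  then have "(\<lambda>j. infdist ((F^^j) y) Orb) \<longlonglongrightarrow> 0" using basinL unfolding basin_def by simp
  then have "(\<lambda>j. infdist ((F^^(j + (n-m))) x) Orb) \<longlonglongrightarrow> 0" unfolding y_def fpa .
  then have "(\<lambda>j. infdist ((F^^j) x) Orb) \<longlonglongrightarrow> 0" by (rule LIMSEQ_offset)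
  then show ?thesis unfolding basin_def by simp
qed

lemma main: "\<exists>p. attracting_periodic_pt F n p \<and>
             (\<forall>q\<in>orbit_pts F n p. q < ym \<or> yp < q) \<and>
             ym \<in> immediate_basin F (orbit_pts F n p) \<and>
             yp \<in> immediate_basin F (orbit_pts F n p)"
proof (intro exI conjI ballI)
  show "attracting_periodic_pt F n p" by (rule attracting)
next
  fix q assume "q \<in> orbit_pts F n p"
  then obtain j where "j < n" "q = (F^^j) p" unfolding orbit_pts_def by auto
  then show "q < ym \<or> yp < q" using orbit_lap by simp
next
  have pp: "aL \<le> p" "p \<le> ym" using p_prop by auto
  have "{aL..ym} \<subseteq> connected_component_set (basin F Orb) p"
    by (rule connected_component_maximal) (use pp basinL in auto)
  moreover have "p \<in> Orb" using Fp_in[of 0] by simp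
  moreover have "ym \<in> {aL..ym}" using aL_ym by simp
  ultimately show "ym \<in> immediate_basin F (orbit_pts F n p)" unfolding immediate_basin_def Orb_def[symmetric]
    by blast
next
  have pp: "aL \<le> p" "p \<le> ym" using p_prop by auto
  have q: "yp \<le> (F^^m) p" "(F^^m) p \<le> bR" using mapL[OF pp] by auto
  have "{yp..bR} \<subseteq> connected_component_set (basin F Orb) ((F^^m) p)"
    by (rule connected_component_maximal) (use q basinR in auto)
  moreover have "(F^^m) p \<in> Orb" by (rule Fp_in)
  moreover have "yp \<in> {yp..bR}" using yp_bR by simp
  ultimately show "yp \<in> immediate_basin F (orbit_pts F n p)" unfolding immediate_basin_def Orb_def[symmetric]
    by blast
qed
end

theorem lemma3p1:
  fixes k n :: nat and g :: "real \<Rightarrow> real" and y_minus y_plus \<epsilon> :: real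
  defines "b \<equiv> real k / real n"
  defines "F \<equiv> (\<lambda>x. x + b - g x)"
  assumes kn: "0 < k" "k < n" "coprime k n"
    and g_range: "\<forall>x. 0 < g x \<and> g x < 1"
    and g_C3: "C3 g"
    and SF_neg: "\<forall>x. deriv F x \<noteq> 0 \<longrightarrow> schwarzian F x < 0"
    and A_pts: "b - 1 < y_minus" "y_minus < 0" "0 < y_plus" "y_plus < b"
    and A_out: "\<forall>x. x < y_minus \<or> y_plus < x \<longrightarrow> 0 < deriv g x \<and> deriv g x < 1"
    and A_crit: "deriv g y_minus = 1" "deriv g y_plus = 1"
    and A_in: "\<forall>x. y_minus < x \<and> x < y_plus \<longrightarrow> deriv g x > 1"
    and B: "g (b - 1) < b" "b < g b"
    and C0: "\<epsilon> > 0"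
    and C1: "\<forall>x. x < - 1 / (2 * real n) \<longrightarrow> g x < \<epsilon>"
    and C2: "\<forall>x. x > 1 / (2 * real n) \<longrightarrow> g x > 1 - \<epsilon>"
    and C3a: "(real n - 1) * \<epsilon> < 1 - g y_plus"
    and C3b: "(real n - 1) * \<epsilon> < 1 / (2 * real n) - (1 - g y_plus + y_plus)"
    and C4a: "(real n - 1) * \<epsilon> < g y_minus"
    and C4b: "(real n - 1) * \<epsilon> < 1 / (2 * real n) - (g y_minus - y_minus)"
  shows "\<exists>p. attracting_periodic_pt F n p \<and>
             (\<forall>q\<in>orbit_pts F n p. q < y_minus \<or> y_plus < q) \<and>
             y_minus \<in> immediate_basin F (orbit_pts F n p) \<and>
             y_plus \<in> immediate_basin F (orbit_pts F n p)"
proof -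
  interpret L: lsetup k n g y_minus y_plus \<epsilon> b F
  proof (unfold_locales)
    show "b = real k / real n" by (simp add: b_def)
    show "F = (\<lambda>x. x + b - g x)" by (simp add: F_def)
    show "\<forall>x. (g has_real_derivative deriv g x) (at x)" using g_C3 unfolding C3_def by blast
  qed (use kn g_range A_pts A_out A_crit C0 C1 C2 C3a C3b C4a C4b in auto)
  show ?thesis by (rule L.main)
qed

end
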